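(* Let $\Delta$ be a simplicial complex on $X=\{x_1,\ldots,x_n\}$ and $k\in\mathbb{N}$ a positive integer. Then $\Delta$ is shellable if and only if its expansion $\Delta^{\mathbf{k}}$ is $k$-shellable.
   Context: For faces $F_1,\dots,F_r$, $\langle F_1,\ldots,F_r\rangle$ denotes the simplicial complex with facets $F_1,\dots,F_r$. $\Delta$ is shellable if its facets can be ordered $F_1,\ldots,F_r$ so that for all $j\ge2$, $\langle F_j\rangle\cap\langle F_1,\ldots,F_{j-1}\rangle$ is pure of dimension $\dim F_j-1$. Expansion: let $X^{\mathbf{k}}=\{x_{ij}:1\le i\le n,1\le j\le k\}$; for $F\subseteq X$, $F^{\mathbf{k}}=\{x_{ij}: x_i\in F, 1\le j\le k\}$; if $\Delta=\langle F_1,\ldots,F_r\rangle$ then $\Delta^{\mathbf{k}}=\langle F_1^{\mathbf{k}},\ldots,F_r^{\mathbf{k}}\rangle$ on $X^{\mathbf{k}}$. $k$-shellability: let $\Gamma$ be a simplicial complex of dimension $d$ and $1\le k\le d+1$; $\Gamma$ is $k$-shellable if its facets can be ordered $F_1,\ldots,F_r$ such that for every $j=2,\ldots,r$, $\Gamma_j=\langle F_j\rangle\cap\langle F_1,\ldots,F_{j-1}\rangle$ satisfies (i) $\Gamma_j$ is generated by a nonempty set of faces of $\langle F_j\rangle$ of dimension $|F_j|-k-1$; (ii) if $\Gamma_j$ has more than one facet, then for every two distinct facets $\sigma,\tau$ of $\Gamma_j$, $F_j\subseteq\sigma\cup\tau$. *)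

theory Defs
  imports Main
begin

definition simplicial_complex :: "'a set \<Rightarrow> 'a set set \<Rightarrow> bool" where
  "simplicial_complex X \<Delta> \<longleftrightarrow> finite X \<and> \<Delta> \<subseteq> Pow X \<and> (\<forall>F\<in>\<Delta>. \<forall>G. G \<subseteq> F \<longrightarrow> G \<in> \<Delta>)"

definition facets :: "'a set set \<Rightarrow> 'a set set" where
  "facets \<Gamma> = {F \<in> \<Gamma>. \<forall>G\<in>\<Gamma>. F \<subseteq> G \<longrightarrow> G = F}"

definition gen :: "'a set set \<Rightarrow> 'a set set" where
  "gen S = {G. \<exists>F\<in>S. G \<subseteq> F}"

definition fdim :: "'a set \<Rightarrow> int" where
  "fdim F = int (card F) - 1"

definition pure_of_dim :: "'a set set \<Rightarrow> int \<Rightarrow> bool" where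
  "pure_of_dim \<Gamma> d \<longleftrightarrow> (\<forall>F\<in>facets \<Gamma>. fdim F = d)"

text \<open>Shellability: an ordering F_1,...,F_r (list L, 0-based) of the facets.\<close>
definition shellable :: "'a set set \<Rightarrow> bool" where
  "shellable \<Delta> \<longleftrightarrow> (\<exists>L. distinct L \<and> set L = facets \<Delta> \<and>
     (\<forall>j. 1 \<le> j \<and> j < length L \<longrightarrow>
        pure_of_dim (gen {L ! j} \<inter> gen (set (take j L))) (fdim (L ! j) - 1)))"

text \<open>k-shellability (conditions (i) and (ii) of the paper).\<close>
definition k_shellable :: "nat \<Rightarrow> 'a set set \<Rightarrow> bool" where
  "k_shellable k \<Gamma> \<longleftrightarrow> (\<exists>L. distinct L \<and> set L = facets \<Gamma> \<and>
     (\<forall>j. 1 \<le> j \<and> j < length L \<longrightarrow>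
        (let Fj = L ! j; \<Gamma>j = gen {Fj} \<inter> gen (set (take j L)) in
          (\<exists>S. S \<noteq> {} \<and> (\<forall>\<sigma>\<in>S. \<sigma> \<subseteq> Fj \<and> fdim \<sigma> = int (card Fj) - int k - 1) \<and> \<Gamma>j = gen S)
          \<and> (card (facets \<Gamma>j) > 1 \<longrightarrow>
               (\<forall>\<sigma>\<in>facets \<Gamma>j. \<forall>\<tau>\<in>facets \<Gamma>j. \<sigma> \<noteq> \<tau> \<longrightarrow> Fj \<subseteq> \<sigma> \<union> \<tau>)))))"

definition expand_face :: "nat \<Rightarrow> 'a set \<Rightarrow> ('a \<times> nat) set" where
  "expand_face k F = F \<times> {1..k}"

definition expansion :: "nat \<Rightarrow> 'a set set \<Rightarrow> ('a \<times> nat) set set" where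
  "expansion k \<Delta> = gen (expand_face k ` facets \<Delta>)"

end

theory Submission
  imports Defs
begin

lemma e_sub:
  assumes "k \<ge> 1"
  shows "expand_face k A \<subseteq> expand_face k B \<longleftrightarrow> A \<subseteq> B"
proof
  assume h: "expand_face k A \<subseteq> expand_face k B"
  show "A \<subseteq> B"
  proof
    fix x assume "x \<in> A"
    then have "(x,1) \<in> expand_face k A" using assms by (auto simp: expand_face_def)
    with h have "(x,1) \<in> expand_face k B" by blast
    then show "x \<in> B" by (simp add: expand_face_def)
  qed
qed (auto simp: expand_face_def)

lemma e_inj: assumes "k \<ge> 1" shows "inj (expand_face k)"
  by (rule injI) (metis assms e_sub subset_antisym order_refl)

lemma e_int: "expand_face k A \<inter> expand_face k B = expand_face k (A \<inter> B)"
  by (auto simp: expand_face_def)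

lemma e_un: "expand_face k A \<union> expand_face k B = expand_face k (A \<union> B)"
  by (auto simp: expand_face_def)

lemma card_e: "card (expand_face k A) = card A * k"
  by (simp add: expand_face_def card_cartesian_product)

lemma gen_inter: "gen {F} \<inter> gen P = gen ((\<lambda>B. F \<inter> B) ` P)"
  by (auto simp: gen_def)

lemma facets_gen: "facets (gen S) = {A\<in>S. \<forall>B\<in>S. A \<subseteq> B \<longrightarrow> B = A}"
proof
  show "facets (gen S) \<subseteq> {A\<in>S. \<forall>B\<in>S. A \<subseteq> B \<longrightarrow> B = A}"
  proof
    fix A assume a: "A \<in> facets (gen S)"
    then have "A \<in> gen S" unfolding facets_def by blast
    then obtain C where c: "C \<in> S" "A \<subseteq> C" unfolding gen_def by blast
    have "C \<in> gen S" using c by (auto simp: gen_def)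
    with a c have "C = A" by (auto simp: facets_def)
    moreover have "\<forall>B\<in>S. A \<subseteq> B \<longrightarrow> B = A"
    proof (intro ballI impI)
      fix B assume "B \<in> S" "A \<subseteq> B"
      moreover then have "B \<in> gen S" by (auto simp: gen_def)
      ultimately show "B = A" using a by (auto simp: facets_def)
    qed
    ultimately show "A \<in> {A\<in>S. \<forall>B\<in>S. A \<subseteq> B \<longrightarrow> B = A}" using c by auto
  qed
next
  show "{A\<in>S. \<forall>B\<in>S. A \<subseteq> B \<longrightarrow> B = A} \<subseteq> facets (gen S)"
  proof
    fix A assume a: "A \<in> {A\<in>S. \<forall>B\<in>S. A \<subseteq> B \<longrightarrow> B = A}"
    have "A \<in> gen S" using a by (auto simp: gen_def)
    moreover have "\<forall>G\<in>gen S. A \<subseteq> G \<longrightarrow> G = A"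
    proof (intro ballI impI)
      fix G assume "G \<in> gen S" "A \<subseteq> G"
      then obtain B where B: "B \<in> S" "G \<subseteq> B" unfolding gen_def by blast
      have "A \<subseteq> B" using B(2) \<open>A \<subseteq> G\<close> by (rule order_trans[rotated])
      with a B have "B = A" by blast
      with B \<open>A \<subseteq> G\<close> show "G = A" by blast
    qed
    ultimately show "A \<in> facets (gen S)" by (simp add: facets_def)
  qed
qed

lemma facets_gen_e:
  assumes "k \<ge> 1"
  shows "facets (gen (expand_face k ` S)) = expand_face k ` facets (gen S)"
proof -
  let ?e = "expand_face k"
  have es: "\<And>A B. ?e A \<subseteq> ?e B \<longleftrightarrow> A \<subseteq> B" by (rule e_sub[OF assms])
  have ei: "\<And>A B. ?e A = ?e B \<longleftrightarrow> A = B" by (rule inj_eq[OF e_inj[OF assms]])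
  have "{A\<in>?e ` S. \<forall>B\<in>?e ` S. A \<subseteq> B \<longrightarrow> B = A} = ?e ` {A\<in>S. \<forall>B\<in>S. A \<subseteq> B \<longrightarrow> B = A}"
  proof (intro equalityI subsetI)
    fix A assume a: "A \<in> {A\<in>?e ` S. \<forall>B\<in>?e ` S. A \<subseteq> B \<longrightarrow> B = A}"
    then have "A \<in> ?e ` S" by simp
    then obtain C where c: "C \<in> S" "A = ?e C" by (rule imageE) simp
    have "\<forall>B\<in>S. C \<subseteq> B \<longrightarrow> B = C"
    proof (intro ballI impI)
      fix B assume "B \<in> S" "C \<subseteq> B"
      have 1: "?e C \<subseteq> ?e B" using \<open>C \<subseteq> B\<close> by (simp only: es)
      have 2: "?e B \<in> ?e ` S" using \<open>B \<in> S\<close> by blast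
      from a have "\<forall>B\<in>?e ` S. A \<subseteq> B \<longrightarrow> B = A" by blast
      then have "A \<subseteq> ?e B \<longrightarrow> ?e B = A" using 2 by (rule bspec)
      then have "?e C \<subseteq> ?e B \<longrightarrow> ?e B = ?e C" by (simp only: c(2))
      with 1 have "?e B = ?e C" by (rule mp[rotated])
      then show "B = C" by (simp only: ei)
    qed
    then show "A \<in> ?e ` {A\<in>S. \<forall>B\<in>S. A \<subseteq> B \<longrightarrow> B = A}" using c by blast
  next
    fix A assume a: "A \<in> ?e ` {A\<in>S. \<forall>B\<in>S. A \<subseteq> B \<longrightarrow> B = A}"
    then obtain C where c0: "C \<in> {A\<in>S. \<forall>B\<in>S. A \<subseteq> B \<longrightarrow> B = A}" "A = ?e C" by (rule imageE) simp
    then have c: "C \<in> S" "A = ?e C" "\<forall>B\<in>S. C \<subseteq> B \<longrightarrow> B = C" by simp_all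
    have "\<forall>B\<in>?e ` S. A \<subseteq> B \<longrightarrow> B = A"
    proof (intro ballI impI)
      fix B assume "B \<in> ?e ` S" "A \<subseteq> B"
      obtain D where D: "D \<in> S" "B = ?e D" using \<open>B \<in> ?e ` S\<close> by (rule imageE) simp
      have "?e C \<subseteq> ?e D" using \<open>A \<subseteq> B\<close> c(2) D(2) by simp
      then have "C \<subseteq> D" by (simp only: es)
      then have "D = C" using c(3) D(1) by blast
      then show "B = A" using c(2) D(2) by simp
    qed
    then show "A \<in> {A\<in>?e ` S. \<forall>B\<in>?e ` S. A \<subseteq> B \<longrightarrow> B = A}" using c by blast
  qed
  then show ?thesis unfolding facets_gen .
qed

lemma facets_facets: "{A\<in>facets D. \<forall>B\<in>facets D. A \<subseteq> B \<longrightarrow> B = A} = facets D"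
  by (auto simp: facets_def)

lemma facets_expansion:
  assumes "k \<ge> 1"
  shows "facets (expansion k D) = expand_face k ` facets D"
proof -
  have "facets (gen (facets D)) = facets D" using facets_gen[of "facets D"] facets_facets[of D] by (rule trans)
  then show ?thesis unfolding expansion_def facets_gen_e[OF assms] by (rule arg_cong)
qed

lemma gen_max:
  assumes "finite I"
  shows "gen {A\<in>I. \<forall>B\<in>I. A \<subseteq> B \<longrightarrow> B = A} = gen I"
proof (intro equalityI subsetI)
  fix G assume "G \<in> gen I"
  then obtain C where "C \<in> I" "G \<subseteq> C" by (auto simp: gen_def)
  then obtain m where "m \<in> I" "C \<subseteq> m" "\<forall>b\<in>I. m \<subseteq> b \<longrightarrow> m = b"
    using finite_has_maximal2[OF assms] by metis
  then show "G \<in> gen {A\<in>I. \<forall>B\<in>I. A \<subseteq> B \<longrightarrow> B = A}"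
    using \<open>G \<subseteq> C\<close> unfolding gen_def by blast
qed (auto simp: gen_def)

lemma key:
  assumes k: "k \<ge> 1" and fF: "finite F" and fP: "finite P" and nP: "P \<noteq> {}"
  shows "pure_of_dim (gen {F} \<inter> gen P) (fdim F - 1) \<longleftrightarrow>
    (let Fj = expand_face k F; \<Gamma>j = gen {Fj} \<inter> gen (expand_face k ` P) in
          (\<exists>S. S \<noteq> {} \<and> (\<forall>\<sigma>\<in>S. \<sigma> \<subseteq> Fj \<and> fdim \<sigma> = int (card Fj) - int k - 1) \<and> \<Gamma>j = gen S)
          \<and> (card (facets \<Gamma>j) > 1 \<longrightarrow>
               (\<forall>\<sigma>\<in>facets \<Gamma>j. \<forall>\<tau>\<in>facets \<Gamma>j. \<sigma> \<noteq> \<tau> \<longrightarrow> Fj \<subseteq> \<sigma> \<union> \<tau>)))"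
proof -
  let ?e = "expand_face k"
  define I where "I = (\<lambda>B. F \<inter> B) ` P"
  define M where "M = {A\<in>I. \<forall>B\<in>I. A \<subseteq> B \<longrightarrow> B = A}"
  have fI: "finite I" using fP by (simp add: I_def)
  have nI: "I \<noteq> {}" using nP by (simp add: I_def)
  have IF: "\<And>A. A \<in> I \<Longrightarrow> A \<subseteq> F" by (auto simp: I_def)
  have MI: "M \<subseteq> I" by (auto simp: M_def)
  have MF: "\<And>A. A \<in> M \<Longrightarrow> A \<subseteq> F" using IF MI by blast
  have fA: "\<And>A. A \<in> M \<Longrightarrow> finite A" using MF fF finite_subset by blast
  have G1: "gen {F} \<inter> gen P = gen I" unfolding I_def by (rule gen_inter)
  have G2: "gen {?e F} \<inter> gen (?e ` P) = gen (?e ` I)"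
    unfolding gen_inter I_def image_image e_int ..
  have facM: "facets (gen I) = M" unfolding facets_gen M_def ..
  have facMk: "facets (gen (?e ` I)) = ?e ` M" using facets_gen_e[OF k, of I] facM by simp
  have Mne: "M \<noteq> {}"
    using finite_has_maximal[OF fI nI] unfolding M_def by blast
  have genM: "gen M = gen I" unfolding M_def by (rule gen_max[OF fI])
  have ce: "\<And>A. int (card (?e A)) = int (card A) * int k" by (simp add: card_e)
  have pure: "pure_of_dim (gen I) (fdim F - 1) \<longleftrightarrow> (\<forall>A\<in>M. int (card A) = int (card F) - 1)"
    unfolding pure_of_dim_def facM fdim_def by auto
  show ?thesis
  proof
    assume "pure_of_dim (gen {F} \<inter> gen P) (fdim F - 1)"
    then have cM: "\<forall>A\<in>M. int (card A) = int (card F) - 1" using pure G1 by simp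
    have i: "\<exists>S. S \<noteq> {} \<and> (\<forall>\<sigma>\<in>S. \<sigma> \<subseteq> ?e F \<and> fdim \<sigma> = int (card (?e F)) - int k - 1) \<and> gen (?e ` I) = gen S"
    proof (intro exI conjI ballI)
      show "?e ` M \<noteq> {}" using Mne by simp
      fix \<sigma> assume "\<sigma> \<in> ?e ` M"
      then obtain A where A: "A \<in> M" "\<sigma> = ?e A" by blast
      show "\<sigma> \<subseteq> ?e F" using A MF e_sub[OF k] by blast
      have h: "int (card F) = int (card A) + 1" using cM A by force
      show "fdim \<sigma> = int (card (?e F)) - int k - 1"
        unfolding fdim_def A ce h by (simp add: algebra_simps)
    next
      have "gen (?e ` I) = gen (?e ` M)"
      proof -
        have "gen (?e ` M) = gen {A\<in>?e ` I. \<forall>B\<in>?e ` I. A \<subseteq> B \<longrightarrow> B = A}"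
          using facMk facets_gen[of "?e ` I"] by simp
        also have "\<dots> = gen (?e ` I)" using fI by (intro gen_max) simp
        finally show ?thesis by simp
      qed
      then show "gen (?e ` I) = gen (?e ` M)" .
    qed
    have ii: "\<forall>\<sigma>\<in>facets (gen (?e ` I)). \<forall>\<tau>\<in>facets (gen (?e ` I)). \<sigma> \<noteq> \<tau> \<longrightarrow> ?e F \<subseteq> \<sigma> \<union> \<tau>"
    proof (intro ballI impI)
      fix \<sigma> \<tau> assume s: "\<sigma> \<in> facets (gen (?e ` I))" and t: "\<tau> \<in> facets (gen (?e ` I))" and d: "\<sigma> \<noteq> \<tau>"
      obtain A where A: "A \<in> M" "\<sigma> = ?e A" using s facMk by blast
      obtain B where B: "B \<in> M" "\<tau> = ?e B" using t facMk by blast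
      have AB: "A \<noteq> B" using A B d by blast
      have cA': "int (card A) = int (card F) - 1" using cM A(1) by blast
      have cB': "int (card B) = int (card F) - 1" using cM B(1) by blast
      have cA: "card A = card B" using cA' cB' by simp
      have "\<not> A \<subseteq> B"
      proof
        assume "A \<subseteq> B"
        then have "A = B" using card_subset_eq[OF fA[OF B(1)]] cA by blast
        with AB show False by blast
      qed
      then obtain x where x: "x \<in> A" "x \<notin> B" by blast
      have xF: "x \<in> F" using x MF A by blast
      have BF: "B \<subseteq> F" using MF B by blast
      have "card (insert x B) = card B + 1" using x fA[OF B(1)] by simp
      also have "\<dots> = card F" using cB' by linarith
      finally have "insert x B = F"
        using card_subset_eq[OF fF] BF xF by blast
      then have "F \<subseteq> A \<union> B" using x by blast
      then have "?e F \<subseteq> ?e (A \<union> B)" using e_sub[OF k] by blast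
      then show "?e F \<subseteq> \<sigma> \<union> \<tau>" unfolding A B e_un .
    qed
    show "let Fj = ?e F; \<Gamma>j = gen {Fj} \<inter> gen (?e ` P) in
          (\<exists>S. S \<noteq> {} \<and> (\<forall>\<sigma>\<in>S. \<sigma> \<subseteq> Fj \<and> fdim \<sigma> = int (card Fj) - int k - 1) \<and> \<Gamma>j = gen S)
          \<and> (card (facets \<Gamma>j) > 1 \<longrightarrow>
               (\<forall>\<sigma>\<in>facets \<Gamma>j. \<forall>\<tau>\<in>facets \<Gamma>j. \<sigma> \<noteq> \<tau> \<longrightarrow> Fj \<subseteq> \<sigma> \<union> \<tau>))"
      unfolding Let_def G2 by (rule conjI[OF i], rule impI, rule ii)
  next
    assume "let Fj = ?e F; \<Gamma>j = gen {Fj} \<inter> gen (?e ` P) in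
          (\<exists>S. S \<noteq> {} \<and> (\<forall>\<sigma>\<in>S. \<sigma> \<subseteq> Fj \<and> fdim \<sigma> = int (card Fj) - int k - 1) \<and> \<Gamma>j = gen S)
          \<and> (card (facets \<Gamma>j) > 1 \<longrightarrow>
               (\<forall>\<sigma>\<in>facets \<Gamma>j. \<forall>\<tau>\<in>facets \<Gamma>j. \<sigma> \<noteq> \<tau> \<longrightarrow> Fj \<subseteq> \<sigma> \<union> \<tau>))"
    then have "\<exists>S. S \<noteq> {} \<and> (\<forall>\<sigma>\<in>S. \<sigma> \<subseteq> ?e F \<and> fdim \<sigma> = int (card (?e F)) - int k - 1) \<and> gen (?e ` I) = gen S"
      unfolding Let_def G2 by (rule conjunct1)
    then obtain S where S0: "\<forall>\<sigma>\<in>S. \<sigma> \<subseteq> ?e F \<and> fdim \<sigma> = int (card (?e F)) - int k - 1" and S2: "gen (?e ` I) = gen S"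
      by blast
    have S: "\<forall>\<sigma>\<in>S. fdim \<sigma> = int (card (?e F)) - int k - 1" "gen (?e ` I) = gen S"
      using S0 S2 by auto
    have "\<forall>A\<in>M. int (card A) = int (card F) - 1"
    proof
      fix A assume A: "A \<in> M"
      have "?e A \<in> facets (gen S)" using A facMk S(2) by auto
      then have "?e A \<in> S" unfolding facets_gen by blast
      then have "fdim (?e A) = int (card (?e F)) - int k - 1" using S(1) by blast
      then have "int (card A) * int k = int (card F) * int k - int k"
        unfolding fdim_def ce by simp
      then have "(int (card A) - (int (card F) - 1)) * int k = 0" by (simp add: algebra_simps)
      then show "int (card A) = int (card F) - 1" using k by simp
    qed
    then show "pure_of_dim (gen {F} \<inter> gen P) (fdim F - 1)" using pure G1 by simp
  qed
qed

lemma perj: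
  assumes k: "k \<ge> 1" and fin: "\<forall>F\<in>set L. finite F" and j: "1 \<le> j" "j < length L"
  shows "pure_of_dim (gen {L ! j} \<inter> gen (set (take j L))) (fdim (L ! j) - 1) \<longleftrightarrow>
    (let Fj = map (expand_face k) L ! j; \<Gamma>j = gen {Fj} \<inter> gen (set (take j (map (expand_face k) L))) in
          (\<exists>S. S \<noteq> {} \<and> (\<forall>\<sigma>\<in>S. \<sigma> \<subseteq> Fj \<and> fdim \<sigma> = int (card Fj) - int k - 1) \<and> \<Gamma>j = gen S)
          \<and> (card (facets \<Gamma>j) > 1 \<longrightarrow>
               (\<forall>\<sigma>\<in>facets \<Gamma>j. \<forall>\<tau>\<in>facets \<Gamma>j. \<sigma> \<noteq> \<tau> \<longrightarrow> Fj \<subseteq> \<sigma> \<union> \<tau>)))"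
proof -
  have 1: "map (expand_face k) L ! j = expand_face k (L ! j)" using j by simp
  have 2: "set (take j (map (expand_face k) L)) = expand_face k ` set (take j L)"
    by (simp add: take_map)
  have fF: "finite (L ! j)" using fin j by simp
  have nP: "set (take j L) \<noteq> {}" using j by (cases L) auto
  show ?thesis unfolding 1 2 by (rule key[OF k fF _ nP]) simp
qed

theorem theorem2p8:
  fixes X :: "'a set" and \<Delta> :: "'a set set" and k :: nat
  assumes "simplicial_complex X \<Delta>" and "k \<ge> 1"
  shows "shellable \<Delta> \<longleftrightarrow> k_shellable k (expansion k \<Delta>)"
proof -
  let ?e = "expand_face k"
  have finF: "\<forall>F\<in>facets \<Delta>. finite F"
  proof
    fix F assume "F \<in> facets \<Delta>"
    then have "F \<in> \<Delta>" unfolding facets_def by blast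
    then have "F \<subseteq> X" using assms(1) unfolding simplicial_complex_def by blast
    moreover have "finite X" using assms(1) unfolding simplicial_complex_def by blast
    ultimately show "finite F" by (rule finite_subset)
  qed
  have fE: "facets (expansion k \<Delta>) = ?e ` facets \<Delta>" by (rule facets_expansion[OF assms(2)])
  have inj: "inj ?e" by (rule e_inj[OF assms(2)])
  show ?thesis
  proof
    assume "shellable \<Delta>"
    then obtain L where L: "distinct L" "set L = facets \<Delta>"
      "\<forall>j. 1 \<le> j \<and> j < length L \<longrightarrow>
        pure_of_dim (gen {L ! j} \<inter> gen (set (take j L))) (fdim (L ! j) - 1)"
      unfolding shellable_def by blast
    have fin: "\<forall>F\<in>set L. finite F" using L(2) finF by simp
    show "k_shellable k (expansion k \<Delta>)" unfolding k_shellable_def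
    proof (intro exI conjI allI impI)
      have "inj_on ?e (set L)" by (rule inj_on_subset[OF inj]) simp
      then show "distinct (map ?e L)" using L(1) by (simp only: distinct_map)
      show "set (map ?e L) = facets (expansion k \<Delta>)" using L(2) fE by simp
      fix j assume j: "1 \<le> j \<and> j < length (map ?e L)"
      then show "let Fj = map (expand_face k) L ! j; \<Gamma>j = gen {Fj} \<inter> gen (set (take j (map (expand_face k) L))) in
          (\<exists>S. S \<noteq> {} \<and> (\<forall>\<sigma>\<in>S. \<sigma> \<subseteq> Fj \<and> fdim \<sigma> = int (card Fj) - int k - 1) \<and> \<Gamma>j = gen S)
          \<and> (card (facets \<Gamma>j) > 1 \<longrightarrow>
               (\<forall>\<sigma>\<in>facets \<Gamma>j. \<forall>\<tau>\<in>facets \<Gamma>j. \<sigma> \<noteq> \<tau> \<longrightarrow> Fj \<subseteq> \<sigma> \<union> \<tau>))"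
      proof -
        have j': "1 \<le> j" "j < length L" using j by simp_all
        have "pure_of_dim (gen {L ! j} \<inter> gen (set (take j L))) (fdim (L ! j) - 1)"
          using L(3) j' by blast
        then show ?thesis by (rule perj[OF assms(2) fin j', THEN iffD1])
      qed
    qed
  next
    assume "k_shellable k (expansion k \<Delta>)"
    then obtain L' where L': "distinct L'" "set L' = facets (expansion k \<Delta>)"
      "\<forall>j. 1 \<le> j \<and> j < length L' \<longrightarrow>
        (let Fj = L' ! j; \<Gamma>j = gen {Fj} \<inter> gen (set (take j L')) in
          (\<exists>S. S \<noteq> {} \<and> (\<forall>\<sigma>\<in>S. \<sigma> \<subseteq> Fj \<and> fdim \<sigma> = int (card Fj) - int k - 1) \<and> \<Gamma>j = gen S)
          \<and> (card (facets \<Gamma>j) > 1 \<longrightarrow>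
               (\<forall>\<sigma>\<in>facets \<Gamma>j. \<forall>\<tau>\<in>facets \<Gamma>j. \<sigma> \<noteq> \<tau> \<longrightarrow> Fj \<subseteq> \<sigma> \<union> \<tau>)))"
      unfolding k_shellable_def by blast
    have "\<forall>y\<in>set L'. \<exists>x. y = ?e x" using L'(2) fE by blast
    then have "\<exists>L. L' = map ?e L" by (simp only: ex_map_conv)
    then obtain L where LL: "L' = map ?e L" by blast
    have "distinct (map ?e L)" using L'(1) LL by simp
    then have dL: "distinct L" by (simp only: distinct_map)
    have "?e ` set L = ?e ` facets \<Delta>" using L'(2) fE LL by simp
    then have sL: "set L = facets \<Delta>" by (simp only: inj_image_eq_iff[OF inj])
    have fin: "\<forall>F\<in>set L. finite F" using sL finF by simp
    show "shellable \<Delta>" unfolding shellable_def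
    proof (intro exI conjI allI impI)
      show "distinct L" by fact
      show "set L = facets \<Delta>" by fact
      fix j assume j: "1 \<le> j \<and> j < length L"
      then have j': "1 \<le> j" "j < length L" by simp_all
      have jm: "1 \<le> j \<and> j < length (map ?e L)" using j' by simp
      have h: "let Fj = map (expand_face k) L ! j; \<Gamma>j = gen {Fj} \<inter> gen (set (take j (map (expand_face k) L))) in
          (\<exists>S. S \<noteq> {} \<and> (\<forall>\<sigma>\<in>S. \<sigma> \<subseteq> Fj \<and> fdim \<sigma> = int (card Fj) - int k - 1) \<and> \<Gamma>j = gen S)
          \<and> (card (facets \<Gamma>j) > 1 \<longrightarrow>
               (\<forall>\<sigma>\<in>facets \<Gamma>j. \<forall>\<tau>\<in>facets \<Gamma>j. \<sigma> \<noteq> \<tau> \<longrightarrow> Fj \<subseteq> \<sigma> \<union> \<tau>))"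
        using L'(3)[unfolded LL, rule_format, OF jm] .
      show "pure_of_dim (gen {L ! j} \<inter> gen (set (take j L))) (fdim (L ! j) - 1)"
        by (rule perj[OF assms(2) fin j', THEN iffD2, OF h])
    qed
  qed
qed

end
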